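(* For $t\in(0,1)$ and all $n\ge 0$ (with $n\ge1$ where $n-1$ indices or $\beta_n$ occur), the following identities hold: $$r_{n+1}+r_n=(t-\alpha_n)R_n,$$ $$-(y_{n+1}+y_n)=(\alpha_n-1)x_n+\beta,$$ $$y_{n+1}+y_n-r_{n+1}-r_n=2n+1+\alpha-\alpha_n(x_n-R_n),$$ $$\beta_nR_nR_{n-1}=r_n^2,$$ $$\beta_nx_nx_{n-1}=y_n^2+\beta y_n,$$ $$\beta_n(x_n-R_n)(x_{n-1}-R_{n-1})=(y_n-r_n-n)^2-\alpha(y_n-r_n-n),$$ $$\beta_n(x_nR_{n-1}+x_{n-1}R_n)=(2n+\alpha+\beta)y_n-(2n+\alpha)r_n+2y_nr_n-n(n+\alpha).$$
   Context: Fix $\alpha>0$, $\beta>0$, and real $A,B$ with $A\ge0$, $A+B\ge0$, not both zero; $\theta$ is the Heaviside step function. For $t\in(0,1)$ let $w(x;t)=x^\alpha(1-x)^\beta(A+B\theta(x-t))$ on $[0,1]$, and let $P_n(x)=P_n(x;t)=x^n+\mathsf p_1(n,t)x^{n-1}+\cdots$ be the monic orthogonal polynomials: $\int_0^1P_iP_jw\,dx=h_i(t)\delta_{ij}$, $h_i>0$, satisfying $xP_n=P_{n+1}+\alpha_nP_n+\beta_nP_{n-1}$, $P_{-1}=0$, $\beta_n=h_n/h_{n-1}$, $\mathsf p_1(0,t)=0$. Define $R_n(t)=B\,t^\alpha(1-t)^\beta P_n(t;t)^2/h_n$, $r_n(t)=B\,t^\alpha(1-t)^\beta P_n(t;t)P_{n-1}(t;t)/h_{n-1}$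 ($r_0=0$), $x_n(t)=\frac{\beta}{h_n}\int_0^1\frac{P_n(y)^2}{1-y}\,y^\alpha(1-y)^\beta(A+B\theta(y-t))\,dy$, $y_n(t)=\frac{\beta}{h_{n-1}}\int_0^1\frac{P_n(y)P_{n-1}(y)}{1-y}\,y^\alpha(1-y)^\beta(A+B\theta(y-t))\,dy$ ($y_0=0$). *)

theory Defs
  imports "HOL-Analysis.Analysis" "HOL-Computational_Algebra.Polynomial"
begin

text \<open>Heaviside step function (value at 0 is irrelevant: a null set).\<close>
definition heaviside :: "real \<Rightarrow> real" where
  "heaviside s = (if s \<ge> 0 then 1 else 0)"

definition wt :: "real \<Rightarrow> real \<Rightarrow> real \<Rightarrow> real \<Rightarrow> real \<Rightarrow> real \<Rightarrow> real" where
  "wt al be A B t x = x powr al * (1 - x) powr be * (A + B * heaviside (x - t))"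

definition ip :: "real \<Rightarrow> real \<Rightarrow> real \<Rightarrow> real \<Rightarrow> real \<Rightarrow> real poly \<Rightarrow> real poly \<Rightarrow> real" where
  "ip al be A B t p q = (LINT x:{0..1}|lborel. poly p x * poly q x * wt al be A B t x)"

definition hn :: "real \<Rightarrow> real \<Rightarrow> real \<Rightarrow> real \<Rightarrow> real \<Rightarrow> (nat \<Rightarrow> real poly) \<Rightarrow> nat \<Rightarrow> real" where
  "hn al be A B t P n = ip al be A B t (P n) (P n)"

text \<open>beta_n = h_n / h_{n-1}; set to 0 for n = 0 (it only multiplies P_{-1} = 0).\<close>
definition betaN :: "real \<Rightarrow> real \<Rightarrow> real \<Rightarrow> real \<Rightarrow> real \<Rightarrow> (nat \<Rightarrow> real poly) \<Rightarrow> nat \<Rightarrow> real" where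
  "betaN al be A B t P n = (if n = 0 then 0 else hn al be A B t P n / hn al be A B t P (n - 1))"

definition Rn :: "real \<Rightarrow> real \<Rightarrow> real \<Rightarrow> real \<Rightarrow> real \<Rightarrow> (nat \<Rightarrow> real poly) \<Rightarrow> nat \<Rightarrow> real" where
  "Rn al be A B t P n = B * t powr al * (1 - t) powr be * (poly (P n) t)^2 / hn al be A B t P n"

definition rn :: "real \<Rightarrow> real \<Rightarrow> real \<Rightarrow> real \<Rightarrow> real \<Rightarrow> (nat \<Rightarrow> real poly) \<Rightarrow> nat \<Rightarrow> real" where
  "rn al be A B t P n = (if n = 0 then 0 else
     B * t powr al * (1 - t) powr be * poly (P n) t * poly (P (n - 1)) t / hn al be A B t P (n - 1))"

definition xn :: "real \<Rightarrow> real \<Rightarrow> real \<Rightarrow> real \<Rightarrow> real \<Rightarrow> (nat \<Rightarrow> real poly) \<Rightarrow> nat \<Rightarrow> real" where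
  "xn al be A B t P n = be / hn al be A B t P n *
     (LINT y:{0..1}|lborel. (poly (P n) y)^2 / (1 - y) * wt al be A B t y)"

definition yn :: "real \<Rightarrow> real \<Rightarrow> real \<Rightarrow> real \<Rightarrow> real \<Rightarrow> (nat \<Rightarrow> real poly) \<Rightarrow> nat \<Rightarrow> real" where
  "yn al be A B t P n = (if n = 0 then 0 else be / hn al be A B t P (n - 1) *
     (LINT y:{0..1}|lborel. poly (P n) y * poly (P (n - 1)) y / (1 - y) * wt al be A B t y))"

end

theory Submission
  imports Defs
begin


lemma bound_int:
  fixes be :: real assumes be: "be > 0"
  shows "set_integrable lborel {0..1::real} (\<lambda>y. (1-y) powr (be-1))"
proof -
  let ?F = "\<lambda>y::real. - ((1-y) powr be / be)"
  have cont: "continuous_on {0..1} ?F"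
    using be by (intro continuous_intros continuous_on_powr') auto
  have der: "(?F has_vector_derivative (1-y) powr (be-1)) (at y)" if "y \<in> {0<..<1}" for y
  proof -
    have "((\<lambda>y. (1-y) powr be) has_real_derivative be * (1-y) powr (be-1) * (-1)) (at y)"
      using that by (auto intro!: derivative_eq_intros)
    then have "(?F has_real_derivative (1-y) powr (be-1)) (at y)"
      using be that by (auto intro!: derivative_eq_intros)
    then show ?thesis by (simp add: has_real_derivative_iff_has_vector_derivative)
  qed
  have "((\<lambda>y. (1-y) powr (be-1)) has_integral (?F 1 - ?F 0)) {0..1}"
    by (rule fundamental_theorem_of_calculus_interior[OF _ cont der]) auto
  then have "(\<lambda>y. (1-y) powr (be-1)) integrable_on {0..1}" by blast
  then have "(\<lambda>y. (1-y) powr (be-1)) absolutely_integrable_on {0..1}"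
    by (rule nonnegative_absolutely_integrable_1) auto
  then have "integrable lebesgue (\<lambda>y. indicator {0..1} y *\<^sub>R (1-y) powr (be-1))"
    by (simp add: set_integrable_def)
  then show ?thesis unfolding set_integrable_def
    by (subst (asm) integrable_completion) auto
qed

lemma poly_meas[measurable]: "poly p \<in> borel_measurable borel"
  for p :: "real poly"
  by (intro borel_measurable_continuous_onI continuous_intros)

lemma wt_meas[measurable]: "wt al be A B t \<in> borel_measurable borel"
  unfolding wt_def heaviside_def by measurable


lemma poly_bounded01: obtains M where "M \<ge> 0" "\<And>y::real. y \<in> {0..1} \<Longrightarrow> \<bar>poly p y\<bar> \<le> M"
proof -
  have "compact (poly p ` {0..1::real})"
    by (intro compact_continuous_image continuous_intros) auto
  then obtain M where "M > 0" "\<forall>x\<in>poly p ` {0..1}. norm x \<le> M"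
    using compact_imp_bounded bounded_pos by metis
  then show ?thesis using that[of M] by auto
qed

lemma wt_bound: "y \<in> {0..1} \<Longrightarrow> \<bar>wt al be A B t y\<bar> \<le> (1-y) powr be * (\<bar>A\<bar> + \<bar>B\<bar>)"
  if "al \<ge> 0" "be \<ge> 0"
proof -
  assume y: "y \<in> {0..1}"
  have a: "y powr al \<le> 1" using that y by (intro powr_le1) auto
  have h: "\<bar>A + B * heaviside (y - t)\<bar> \<le> \<bar>A\<bar> + \<bar>B\<bar>" by (auto simp: heaviside_def)
  have "\<bar>wt al be A B t y\<bar> = y powr al * (1-y) powr be * \<bar>A + B * heaviside (y - t)\<bar>"
    by (simp add: wt_def abs_mult)
  also have "\<dots> \<le> 1 * (1-y) powr be * (\<bar>A\<bar> + \<bar>B\<bar>)"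
    using a h by (intro mult_mono) auto
  finally show ?thesis by simp
qed

lemma int_poly:
  assumes "al \<ge> 0" "be \<ge> 0"
  shows "set_integrable lborel {0..1::real} (\<lambda>y. poly p y * wt al be A B t y)"
proof -
  obtain M where M: "M \<ge> 0" "\<And>y::real. y \<in> {0..1} \<Longrightarrow> \<bar>poly p y\<bar> \<le> M" using poly_bounded01[of p] by blast
  have c: "set_integrable lborel {0..1::real} (\<lambda>y. M * (\<bar>A\<bar> + \<bar>B\<bar>))"
    by (rule borel_integrable_atLeastAtMost') (intro continuous_intros)
  show ?thesis
  proof (rule set_integrable_bound[OF c])
    show "set_borel_measurable lborel {0..1} (\<lambda>y. poly p y * wt al be A B t y)"
      unfolding set_borel_measurable_def measurable_lborel1 by measurable
    show "AE x in lborel. x \<in> {0..1} \<longrightarrow> norm (poly p x * wt al be A B t x) \<le> norm (M * (\<bar>A\<bar> + \<bar>B\<bar>))"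
    proof (intro AE_I2 impI)
      fix x :: real assume x: "x \<in> {0..1}"
      have "(1-x) powr be \<le> 1" using x assms by (intro powr_le1) auto
      then have "\<bar>wt al be A B t x\<bar> \<le> \<bar>A\<bar> + \<bar>B\<bar>"
      proof -
        have "(1-x) powr be * (\<bar>A\<bar> + \<bar>B\<bar>) \<le> \<bar>A\<bar> + \<bar>B\<bar>"
          using \<open>(1-x) powr be \<le> 1\<close> by (intro mult_left_le_one_le) auto
        then show ?thesis using wt_bound[OF assms x, of A B t] by linarith
      qed
      then show "norm (poly p x * wt al be A B t x) \<le> norm (M * (\<bar>A\<bar> + \<bar>B\<bar>))"
        using M x by (simp add: abs_mult mult_mono)
    qed
  qed
qed

lemma int_poly_div:
  assumes "al \<ge> 0" "be > 0"
  shows "set_integrable lborel {0..1::real} (\<lambda>y. poly p y / (1-y) * wt al be A B t y)"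
proof -
  obtain M where M: "M \<ge> 0" "\<And>y::real. y \<in> {0..1} \<Longrightarrow> \<bar>poly p y\<bar> \<le> M" using poly_bounded01[of p] by blast
  have c: "set_integrable lborel {0..1::real} (\<lambda>y. (M * (\<bar>A\<bar> + \<bar>B\<bar>)) * (1-y) powr (be-1))"
    using bound_int[OF assms(2)] by (intro set_integrable_mult_right) auto
  show ?thesis
  proof (rule set_integrable_bound[OF c])
    show "set_borel_measurable lborel {0..1} (\<lambda>y. poly p y / (1-y) * wt al be A B t y)"
      unfolding set_borel_measurable_def measurable_lborel1 by measurable
    show "AE x in lborel. x \<in> {0..1} \<longrightarrow> norm (poly p x / (1-x) * wt al be A B t x) \<le> norm ((M * (\<bar>A\<bar> + \<bar>B\<bar>)) * (1-x) powr (be-1))"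
    proof (intro AE_I2 impI)
      fix x :: real assume x: "x \<in> {0..1}"
      show "norm (poly p x / (1-x) * wt al be A B t x) \<le> norm ((M * (\<bar>A\<bar> + \<bar>B\<bar>)) * (1-x) powr (be-1))"
      proof (cases "x = 1")
        case True then show ?thesis by simp
      next
        case False
        then have x1: "1 - x > 0" using x by auto
        have e: "(1-x) powr (be-1) = (1-x) powr be / (1-x)" using x1 by (simp add: powr_diff)
        have w: "\<bar>wt al be A B t x\<bar> / (1-x) \<le> (1-x) powr (be-1) * (\<bar>A\<bar> + \<bar>B\<bar>)"
        proof -
          have "\<bar>wt al be A B t x\<bar> / (1-x) \<le> ((1-x) powr be * (\<bar>A\<bar> + \<bar>B\<bar>)) / (1-x)"
            using wt_bound[OF _ _ x, of al be A B t] assms x1 by (intro divide_right_mono) auto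
          also have "\<dots> = (1-x) powr be / (1-x) * (\<bar>A\<bar> + \<bar>B\<bar>)" by simp
          finally show ?thesis unfolding e .
        qed
        have "norm (poly p x / (1-x) * wt al be A B t x) = \<bar>poly p x\<bar> * (\<bar>wt al be A B t x\<bar> / (1-x))"
          using x1 by (simp add: abs_mult)
        also have "\<dots> \<le> M * ((1-x) powr (be-1) * (\<bar>A\<bar> + \<bar>B\<bar>))"
          using M x w by (intro mult_mono) auto
        finally show ?thesis using M(1) by (simp add: abs_mult mult_ac)
      qed
    qed
  qed
qed



lemma ibp:
  fixes al be A B t :: real and r :: "real poly"
  assumes al: "al > 0" and be: "be > 0" and t: "0 < t" "t < 1"
  defines "q \<equiv> [:0,1:] * r"
  shows "be * (LINT y:{0..1}|lborel. poly q y / (1-y) * wt al be A B t y)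
    = (LINT y:{0..1}|lborel. poly (pderiv q + smult al r) y * wt al be A B t y)
      + B * t powr al * (1-t) powr be * (t * poly r t)"
proof -
  define g where "g y = y powr al * (1-y) powr be * poly q y" for y :: real
  define g' where "g' y = poly (pderiv q + smult al r) y * y powr al * (1-y) powr be
      - be * poly q y / (1-y) * y powr al * (1-y) powr be" for y :: real
  have qy: "poly q y = y * poly r y" for y by (simp add: q_def)
  have contg: "continuous_on {a..b} g" if "0 \<le> a" "b \<le> 1" for a b
    unfolding g_def using that al be
    by (intro continuous_intros continuous_on_powr') auto
  have derg: "(g has_vector_derivative g' y) (at y)" if y: "0 < y" "y < 1" for y
  proof -
    have "(g has_real_derivative
        (al * y powr (al - 1) * (1-y) powr be + y powr al * (be * (1-y) powr (be-1) * -1)) * poly q y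
         + y powr al * (1-y) powr be * poly (pderiv q) y) (at y)"
      unfolding g_def using y
      by (auto intro!: derivative_eq_intros poly_DERIV simp: algebra_simps)
    moreover have "(al * y powr (al - 1) * (1-y) powr be + y powr al * (be * (1-y) powr (be-1) * -1)) * poly q y
         + y powr al * (1-y) powr be * poly (pderiv q) y = g' y"
    proof -
      have e1: "y powr (al - 1) = y powr al / y" using y by (simp add: powr_diff)
      have e2: "(1-y) powr (be - 1) = (1-y) powr be / (1-y)" using y by (simp add: powr_diff)
      show ?thesis unfolding g'_def e1 e2 qy using y
        by (simp add: field_simps)
    qed
    ultimately show ?thesis by (simp add: has_real_derivative_iff_has_vector_derivative)
  qed
  have g0: "g 0 = 0" and g1: "g 1 = 0" using al be by (simp_all add: g_def)
  define f where "f y = g' y * (A + B * heaviside (y - t))" for y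
  have i1: "(g' has_integral (g t - g 0)) {0..t}"
    by (rule fundamental_theorem_of_calculus_interior[OF _ contg derg]) (use t in auto)
  have i2: "(g' has_integral (g 1 - g t)) {t..1}"
    by (rule fundamental_theorem_of_calculus_interior[OF _ contg derg]) (use t in auto)
  have f1: "(f has_integral (A * (g t - g 0))) {0..t}"
  proof (rule has_integral_spike_finite[where S="{t}" and f="\<lambda>y. A * g' y"])
    show "((\<lambda>y. A * g' y) has_integral A * (g t - g 0)) {0..t}"
      using has_integral_mult_right[OF i1] .
    show "\<And>x. x \<in> {0..t} - {t} \<Longrightarrow> f x = A * g' x"
      by (auto simp: f_def heaviside_def)
  qed auto
  have f2: "(f has_integral ((A+B) * (g 1 - g t))) {t..1}"
  proof -
    have "((\<lambda>y. (A+B) * g' y) has_integral (A+B) * (g 1 - g t)) {t..1}"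
      using has_integral_mult_right[OF i2] .
    then show ?thesis
      by (rule has_integral_eq[rotated]) (auto simp: f_def heaviside_def algebra_simps)
  qed
  have "(f has_integral (A * (g t - g 0) + (A+B) * (g 1 - g t))) {0..1}"
    by (rule has_integral_combine[OF _ _ f1 f2]) (use t in auto)
  then have fI: "(f has_integral (- B * g t)) {0..1}"
    by (simp add: g0 g1 algebra_simps)
  have feq: "f y = poly (pderiv q + smult al r) y * wt al be A B t y
                 - be * (poly q y / (1-y) * wt al be A B t y)" for y
    by (simp add: f_def g'_def wt_def algebra_simps add_divide_distrib)
  have s1: "set_integrable lborel {0..1::real} (\<lambda>y. poly (pderiv q + smult al r) y * wt al be A B t y)"
    by (rule int_poly) (use al be in auto)
  have s2: "set_integrable lborel {0..1::real} (\<lambda>y. poly q y / (1-y) * wt al be A B t y)"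
    by (rule int_poly_div) (use al be in auto)
  have s2': "set_integrable lborel {0..1::real} (\<lambda>y. be * (poly q y / (1-y) * wt al be A B t y))"
    using set_integrable_mult_right[of be lborel "{0..1}", OF s2] .
  have sf: "set_integrable lborel {0..1::real} f"
    unfolding feq[abs_def] using set_integral_diff(1)[OF s1 s2'] .
  have "(LINT y:{0..1}|lborel. f y) = - B * g t"
    using set_borel_integral_eq_integral(2)[OF sf] fI by (simp add: integral_unique)
  moreover have "(LINT y:{0..1}|lborel. f y) = (LINT y:{0..1}|lborel. poly (pderiv q + smult al r) y * wt al be A B t y)
     - be * (LINT y:{0..1}|lborel. poly q y / (1-y) * wt al be A B t y)"
    by (simp only: feq set_integral_diff(2)[OF s1 s2'] set_integral_mult_right)
  ultimately show ?thesis by (simp add: g_def qy algebra_simps)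
qed



lemma root_decomp:
  fixes p :: "real poly" and a :: real
  obtains Q where "p = [:-a,1:] * Q + [:poly p a:]" "\<forall>k\<ge>degree p. coeff Q k = 0"
    "degree p \<ge> 1 \<Longrightarrow> coeff Q (degree p - 1) = lead_coeff p"
proof -
  have "poly (p - [:poly p a:]) a = 0" by simp
  then have "[:-a,1:] dvd (p - [:poly p a:])" using poly_eq_0_iff_dvd by blast
  then obtain Q where Q: "p - [:poly p a:] = [:-a,1:] * Q" by (auto elim: dvdE)
  then have pQ: "p = [:-a,1:] * Q + [:poly p a:]" by (simp add: algebra_simps)
  show ?thesis
  proof (cases "Q = 0")
    case True
    then have "p = [:poly p a:]" using pQ by simp
    then have "degree p = 0" by (metis degree_pCons_0)
    then show ?thesis using that[OF pQ] True by simp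
  next
    case False
    have d1: "degree ([:-a,1:] * Q) = degree Q + 1"
      using False by (subst degree_mult_eq) auto
    have dp: "degree p = degree Q + 1"
      using pQ d1 by (metis degree_add_eq_left degree_pCons_0 zero_less_Suc add.commute plus_1_eq_Suc)
    have lc: "lead_coeff p = lead_coeff Q"
    proof -
      have "lead_coeff p = coeff ([:-a,1:] * Q) (degree Q + 1) + coeff [:poly p a:] (degree Q + 1)"
        using pQ dp by (metis coeff_add)
      also have "\<dots> = coeff ([:-a,1:] * Q) (degree Q + 1)" by (simp only: coeff_pCons_Suc Suc_eq_plus1[symmetric] coeff_pCons_0 pCons_0_0) simp
      also have "\<dots> = lead_coeff ([:-a,1:] * Q)" by (simp only: d1)
      also have "\<dots> = lead_coeff Q" by (simp only: lead_coeff_mult) simp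
      finally show ?thesis .
    qed
    show ?thesis
    proof (rule that[OF pQ])
      show "\<forall>k\<ge>degree p. coeff Q k = 0" using dp by (auto intro: coeff_eq_0)
      show "coeff Q (degree p - 1) = lead_coeff p" using dp lc by simp
    qed
  qed
qed

locale opsetup =
  fixes al be A B t :: real
    and P :: "nat \<Rightarrow> real poly"
    and alpha :: "nat \<Rightarrow> real"
  assumes hal: "al > 0" and hbe: "be > 0"
    and ht0: "0 < t" and ht1: "t < 1"
    and hdeg: "\<forall>n. degree (P n) = n \<and> lead_coeff (P n) = 1"
    and horth: "\<forall>i j. i \<noteq> j \<longrightarrow> ip al be A B t (P i) (P j) = 0"
    and hpos: "\<forall>n. hn al be A B t P n > 0"
    and hrec: "\<forall>n. [:0, 1:] * P n = P (Suc n) + smult (alpha n) (P n)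
                    + smult (betaN al be A B t P n) (P (n - 1))"
begin

definition Ip :: "real poly \<Rightarrow> real" where
  "Ip p = (LINT y:{0..1}|lborel. poly p y * wt al be A B t y)"
definition Lf :: "real poly \<Rightarrow> real" where
  "Lf p = be * (LINT y:{0..1}|lborel. poly p y / (1-y) * wt al be A B t y)"
definition E :: real where "E = B * t powr al * (1-t) powr be"
definition Mf :: "real poly \<Rightarrow> real" where
  "Mf p = Lf p - Ip (pderiv p) - E * poly p t"
abbreviation h where "h n \<equiv> hn al be A B t P n"

lemma intI: "set_integrable lborel {0..1::real} (\<lambda>y. poly p y * wt al be A B t y)"
  by (rule int_poly) (use hal hbe in auto)
lemma intL: "set_integrable lborel {0..1::real} (\<lambda>y. poly p y / (1-y) * wt al be A B t y)"
  by (rule int_poly_div) (use hal hbe in auto)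

lemma Ip_add: "Ip (p + q) = Ip p + Ip q"
  unfolding Ip_def using set_integral_add(2)[OF intI[of p] intI[of q]]
  by (simp add: distrib_right)
lemma Ip_smult: "Ip (smult c p) = c * Ip p"
  unfolding Ip_def by (simp add: mult.assoc)
lemma Ip_diff: "Ip (p - q) = Ip p - Ip q"
  using Ip_add[of "p - q" q] by simp
lemma Ip_0: "Ip 0 = 0" unfolding Ip_def by simp

lemma Lf_add: "Lf (p + q) = Lf p + Lf q"
  unfolding Lf_def using set_integral_add(2)[OF intL[of p] intL[of q]]
  by (simp add: add_divide_distrib distrib_right distrib_left)
lemma Lf_smult: "Lf (smult c p) = c * Lf p"
proof -
  have "(\<lambda>y. poly (smult c p) y / (1-y) * wt al be A B t y) = (\<lambda>y. c * (poly p y / (1-y) * wt al be A B t y))"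
    by auto
  then show ?thesis unfolding Lf_def by (simp only: set_integral_mult_right) simp
qed
lemma Lf_diff: "Lf (p - q) = Lf p - Lf q"
  using Lf_add[of "p - q" q] by simp

lemma Mf_add: "Mf (p + q) = Mf p + Mf q"
  unfolding Mf_def by (simp add: Lf_add Ip_add pderiv_add algebra_simps)
lemma Mf_smult: "Mf (smult c p) = c * Mf p"
  unfolding Mf_def by (simp add: Lf_smult Ip_smult pderiv_smult algebra_simps)

lemma ip_Ip: "ip al be A B t p q = Ip (p * q)"
  unfolding ip_def Ip_def by simp
lemma h_Ip: "h n = Ip (P n * P n)"
  unfolding hn_def ip_Ip ..
lemma hp: "h n > 0" using hpos by auto

lemma Lf_root1: "Lf ([:-1,1:] * q) = - be * Ip q"
proof -
  have "(LINT y:{0..1}|lborel. poly ([:-1,1:] * q) y / (1-y) * wt al be A B t y)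
      = (LINT y:{0..1}|lborel. - (poly q y * wt al be A B t y))"
  proof (rule set_lebesgue_integral_cong)
    show "\<forall>x. x \<in> {0..1} \<longrightarrow> poly ([:-1,1:] * q) x / (1-x) * wt al be A B t x = - (poly q x * wt al be A B t x)"
    proof (intro allI impI)
      fix x :: real assume x: "x \<in> {0..1}"
      show "poly ([:-1,1:] * q) x / (1-x) * wt al be A B t x = - (poly q x * wt al be A B t x)"
      proof (cases "x = 1")
        case True then show ?thesis using hbe by (simp add: wt_def)
      next
        case False
        then have "1 - x \<noteq> 0" by simp
        then show ?thesis by (simp add: field_simps)
      qed
    qed
  qed auto
  then show ?thesis unfolding Lf_def Ip_def using set_integral_uminus[OF intI[of q]] by simp
qed

lemma Mf_root0: "Mf ([:0,1:] * r) = al * Ip r"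
proof -
  have "Lf ([:0,1:] * r) = Ip (pderiv ([:0,1:] * r) + smult al r) + E * (t * poly r t)"
    unfolding Lf_def Ip_def E_def
    by (rule ibp) (use hal hbe ht0 ht1 in auto)
  then show ?thesis unfolding Mf_def by (simp add: Ip_add Ip_smult)
qed

lemma degP: "degree (P n) = n" and lcP: "coeff (P n) n = 1"
  using hdeg by auto (metis)

lemma coeffP: "k > n \<Longrightarrow> coeff (P n) k = 0"
  using degP[of n] by (simp add: coeff_eq_0)

lemma orth_aux: "\<forall>q::real poly. (\<forall>k\<ge>m. coeff q k = 0) \<longrightarrow> (\<forall>i\<ge>m. Ip (P i * q) = 0)"
proof (induction m)
  case 0
  then show ?case
  proof (intro allI impI)
    fix q :: "real poly" and i assume "\<forall>k\<ge>0. coeff q k = (0::real)"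
    then have "q = 0" by (intro poly_eqI) auto
    then show "Ip (P i * q) = 0" by (simp add: Ip_0)
  qed
next
  case (Suc m)
  show ?case
  proof (intro allI impI)
    fix q :: "real poly" and i assume q: "\<forall>k\<ge>Suc m. coeff q k = 0" and i: "Suc m \<le> i"
    define q' where "q' = q - smult (coeff q m) (P m)"
    have "\<forall>k\<ge>m. coeff q' k = 0"
    proof (intro allI impI)
      fix k assume "m \<le> k"
      then consider "k = m" | "k > m" by linarith
      then show "coeff q' k = 0"
        by cases (use q lcP coeffP in \<open>auto simp: q'_def\<close>)
    qed
    then have 1: "Ip (P i * q') = 0" using Suc.IH i by auto
    have 2: "Ip (P i * P m) = 0" using horth i by (auto simp: ip_Ip)
    have "P i * q = P i * q' + smult (coeff q m) (P i * P m)"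
      by (simp add: q'_def algebra_simps)
    then show "Ip (P i * q) = 0" by (simp add: Ip_add Ip_smult 1 2)
  qed
qed

lemma orth: "(\<And>k. k \<ge> i \<Longrightarrow> coeff q k = 0) \<Longrightarrow> Ip (P i * q) = 0" for q :: "real poly"
  using orth_aux by blast

lemma proj: fixes q :: "real poly" assumes "\<And>k. k > i \<Longrightarrow> coeff q k = 0" shows "Ip (P i * q) = coeff q i * h i"
proof -
  define q' where "q' = q - smult (coeff q i) (P i)"
  have "Ip (P i * q') = 0"
  proof (rule orth)
    fix k assume "i \<le> k"
    then consider "k = i" | "k > i" by linarith
    then show "coeff q' k = 0" by cases (use assms lcP coeffP in \<open>auto simp: q'_def\<close>)
  qed
  moreover have "P i * q = P i * q' + smult (coeff q i) (P i * P i)"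
    by (simp add: q'_def algebra_simps)
  ultimately show ?thesis by (simp add: Ip_add Ip_smult h_Ip)
qed

end

lemma alg7:
  fixes b R1 R0 x1 x0 y r nn al be :: real
  assumes "b * R1 * R0 = r^2" "b * x1 * x0 = y^2 + be * y"
    "b * (x1 - R1) * (x0 - R0) = (y - r - nn)^2 - al * (y - r - nn)"
  shows "b * (x1 * R0 + x0 * R1) = (2 * nn + al + be) * y - (2 * nn + al) * r + 2 * y * r - nn * (nn + al)"
proof -
  have "b * (x1 * R0 + x0 * R1) = b * x1 * x0 + b * R1 * R0 - b * (x1 - R1) * (x0 - R0)"
    by (simp add: algebra_simps)
  also have "\<dots> = (y^2 + be * y) + r^2 - ((y - r - nn)^2 - al * (y - r - nn))"
    by (simp only: assms)
  finally show ?thesis by (simp add: algebra_simps power2_eq_square)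
qed


lemma polyeqI: "(\<And>x. poly p x = poly q x) \<Longrightarrow> p = (q::real poly)"
  using poly_eq_poly_eq_iff by blast

lemma mul_decomp: assumes "p = [:-a,1:] * Q + [:c:]" shows "x * p = [:-a,1:] * (x * Q) + smult c (x :: real poly)"
  unfolding assms by (rule polyeqI) (simp add: algebra_simps)

lemma coeff_X_pderiv: "coeff (pCons 0 (pderiv p)) k = of_nat k * coeff p k"
  by (cases k) (auto simp: coeff_pderiv)

lemma alg5:
  fixes hn hm a b c d Z be :: real
  assumes "hn > 0" "hm > 0" "Z = d*a" "Z = c*b - be*hm"
  shows "hn / hm * (c*a/hn) * (d*b/hm) = (Z/hm)^2 + be*(Z/hm)"
proof -
  have z: "Z + be*hm = c*b" using assms(4) by simp
  have "c*a*(d*b) = (d*a)*(c*b)" by (simp only: mult_ac)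
  also have "\<dots> = Z * (Z + be*hm)" by (metis z assms(3))
  finally have "c*a*(d*b) = Z * (Z + be*hm)" .
  then show ?thesis using assms(1,2) by (simp add: field_simps power2_eq_square)
qed

lemma alg6:
  fixes hn hm a b c d Z al :: real
  assumes "hn > 0" "hm > 0" "Z = d*a" "Z = al*hm + c*b"
  shows "hn / hm * (c*a/hn) * (d*b/hm) = (Z/hm)^2 - al*(Z/hm)"
proof -
  have z: "Z - al*hm = c*b" using assms(4) by simp
  have "c*a*(d*b) = (d*a)*(c*b)" by (simp only: mult_ac)
  also have "\<dots> = Z * (Z - al*hm)" by (metis z assms(3))
  finally have "c*a*(d*b) = Z * (Z - al*hm)" .
  then show ?thesis using assms(1,2) by (simp add: field_simps power2_eq_square)
qed

context opsetup begin

lemma polyrec: "P (Suc n) = [:-alpha n,1:] * P n - smult (betaN al be A B t P n) (P (n-1))"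
proof (rule polyeqI)
  fix x
  have "poly ([:0, 1:] * P n) x = poly (P (Suc n) + smult (alpha n) (P n)
                    + smult (betaN al be A B t P n) (P (n - 1))) x"
    using hrec by metis
  then show "poly (P (Suc n)) x = poly ([:-alpha n,1:] * P n - smult (betaN al be A B t P n) (P (n-1))) x"
    by (simp add: algebra_simps)
qed

lemma polyrec_t: "poly (P (Suc n)) t = (t - alpha n) * poly (P n) t - betaN al be A B t P n * poly (P (n-1)) t"
  by (subst polyrec) (simp add: algebra_simps)

lemma beta0: "betaN al be A B t P 0 = 0" by (simp add: betaN_def)
lemma betaS: "betaN al be A B t P (Suc m) = h (Suc m) / h m" by (simp add: betaN_def)

lemma Rn_eq: "Rn al be A B t P n = E * (poly (P n) t)^2 / h n"
  by (simp add: Rn_def E_def)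
lemma rn0: "rn al be A B t P 0 = 0" by (simp add: rn_def)
lemma rnS: "rn al be A B t P (Suc m) = E * poly (P (Suc m)) t * poly (P m) t / h m"
  by (simp add: rn_def E_def)
lemma xn_eq: "xn al be A B t P n = Lf (P n * P n) / h n"
  by (simp add: xn_def Lf_def power2_eq_square)
lemma yn0: "yn al be A B t P 0 = 0" by (simp add: yn_def)
lemma ynS: "yn al be A B t P (Suc m) = Lf (P (Suc m) * P m) / h m"
  by (simp add: yn_def Lf_def)

lemma hm_pos: "h m > 0" "h m \<noteq> 0" using hp[of m] by auto

lemma id1: "rn al be A B t P (n + 1) + rn al be A B t P n = (t - alpha n) * Rn al be A B t P n"
proof (cases n)
  case 0
  have e: "poly (P (Suc 0)) t = (t - alpha 0) * poly (P 0) t" using polyrec_t[of 0] by (simp add: beta0)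
  show ?thesis using hm_pos[of 0] unfolding 0
    by (simp add: rnS rn0 Rn_eq e field_simps power2_eq_square)
next
  case (Suc m)
  have e: "poly (P (Suc n)) t = (t - alpha n) * poly (P n) t - h n / h m * poly (P m) t"
    using polyrec_t[of n] Suc by (simp add: betaS)
  have r1: "rn al be A B t P (n+1) = E * ((t - alpha n) * poly (P n) t - h n / h m * poly (P m) t) * poly (P n) t / h n"
    using rnS[of n] e by simp
  have r2: "rn al be A B t P n = E * poly (P n) t * poly (P m) t / h m"
    using rnS[of m] Suc by simp
  show ?thesis using hm_pos[of m] hm_pos[of n] unfolding r1 r2 Rn_eq
    by (simp add: field_simps power2_eq_square)
qed

lemma pX: "[:0,1:] * r = [:-1,1:] * r + (r::real poly)"
  by (rule polyeqI) (simp add: algebra_simps)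

lemma id2: "- (yn al be A B t P (n + 1) + yn al be A B t P n) = (alpha n - 1) * xn al be A B t P n + be"
proof -
  have pp: "P (Suc n) * P n = [:-1,1:] * (P n * P n) + smult (1 - alpha n) (P n * P n)
      - smult (betaN al be A B t P n) (P n * P (n-1))"
    by (subst polyrec) (rule polyeqI, simp add: algebra_simps)
  have L: "Lf (P (Suc n) * P n) = - be * h n + (1 - alpha n) * Lf (P n * P n)
      - betaN al be A B t P n * Lf (P n * P (n-1))"
    unfolding pp by (simp only: Lf_add Lf_diff Lf_smult Lf_root1 h_Ip)
  have y1: "yn al be A B t P (n + 1) = - be + (1 - alpha n) * xn al be A B t P n
      - betaN al be A B t P n * Lf (P n * P (n-1)) / h n"
  proof -
    have "yn al be A B t P (n + 1) = Lf (P (Suc n) * P n) / h n" using ynS[of n] by simp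
    also have "\<dots> = (- be * h n + (1 - alpha n) * Lf (P n * P n)
      - betaN al be A B t P n * Lf (P n * P (n-1))) / h n" by (simp only: L)
    also have "\<dots> = - be + (1 - alpha n) * (Lf (P n * P n) / h n)
      - betaN al be A B t P n * Lf (P n * P (n-1)) / h n"
      using hm_pos[of n] by (simp add: diff_divide_distrib add_divide_distrib)
    finally show ?thesis by (simp add: xn_eq)
  qed
  have y2: "betaN al be A B t P n * Lf (P n * P (n-1)) / h n = yn al be A B t P n"
  proof (cases n)
    case 0 then show ?thesis by (simp add: beta0 yn0)
  next
    case (Suc m) then show ?thesis using hm_pos[of m] hm_pos[of n] by (simp add: betaS ynS)
  qed
  show ?thesis using y1 y2 by (simp add: algebra_simps)
qed

lemma Ip_X_pderiv: "Ip (P n * ([:0,1:] * pderiv (P n))) = of_nat n * h n"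
proof -
  have "Ip (P n * pCons 0 (pderiv (P n))) = coeff (pCons 0 (pderiv (P n))) n * h n"
    by (rule proj) (simp add: coeff_X_pderiv coeffP)
  then show ?thesis by (simp add: coeff_X_pderiv lcP)
qed

lemma Ip_pderiv_same: "Ip (P n * pderiv (P n)) = 0"
  by (rule orth) (simp add: coeff_pderiv coeffP)

lemma Ip_pderiv_up: "Ip (P m * pderiv (P (Suc m))) = of_nat (Suc m) * h m"
proof -
  have "Ip (P m * pderiv (P (Suc m))) = coeff (pderiv (P (Suc m))) m * h m"
    by (rule proj) (simp add: coeff_pderiv coeffP)
  then show ?thesis by (simp add: coeff_pderiv lcP)
qed

lemma Ip_pderiv_down: "Ip (P (Suc m) * pderiv (P m)) = 0"
  by (rule orth) (simp add: coeff_pderiv coeffP)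

lemma xtR: "Lf (P n * P n) - t * E * (poly (P n) t)^2 = (2 * real n + 1 + al + be) * h n"
proof -
  define r where "r = P n * P n"
  have M: "Mf ([:0,1:] * r) = al * h n" using Mf_root0[of r] by (simp add: r_def h_Ip)
  have L: "Lf ([:0,1:] * r) = - be * h n + Lf r"
    by (simp only: pX Lf_add Lf_root1 r_def h_Ip)
  have pd: "pderiv ([:0,1:] * r) = smult 2 (P n * ([:0,1:] * pderiv (P n))) + r"
    by (rule polyeqI) (simp add: r_def pderiv_mult pderiv_pCons algebra_simps)
  have I: "Ip (pderiv ([:0,1:] * r)) = 2 * of_nat n * h n + h n"
    unfolding pd by (simp only: Ip_add Ip_smult Ip_X_pderiv r_def h_Ip) (simp?)
  have "Mf ([:0,1:] * r) = - be * h n + Lf r - (2 * of_nat n * h n + h n) - E * (t * (poly (P n) t)^2)"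
    unfolding Mf_def L I by (simp add: r_def power2_eq_square)
  then show ?thesis using M by (simp add: r_def algebra_simps)
qed

lemma id3: "yn al be A B t P (n + 1) + yn al be A B t P n - rn al be A B t P (n + 1) - rn al be A B t P n
          = 2 * real n + 1 + al - alpha n * (xn al be A B t P n - Rn al be A B t P n)"
proof -
  have x: "xn al be A B t P n - t * Rn al be A B t P n = 2 * real n + 1 + al + be"
    using xtR[of n] hm_pos[of n] by (simp add: xn_eq Rn_eq field_simps)
  show ?thesis using id1[of n] id2[of n] x by (simp add: algebra_simps)
qed

lemma id4: "betaN al be A B t P (Suc m) * Rn al be A B t P (Suc m) * Rn al be A B t P m
          = (rn al be A B t P (Suc m))^2"
  using hm_pos[of m] hm_pos[of "Suc m"]
  by (simp add: betaS Rn_eq rnS field_simps power2_eq_square)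

lemma id5: "betaN al be A B t P (Suc m) * xn al be A B t P (Suc m) * xn al be A B t P m
          = (yn al be A B t P (Suc m))^2 + be * yn al be A B t P (Suc m)"
proof -
  let ?n = "Suc m"
  obtain Qn where Qn: "P ?n = [:-1,1:] * Qn + [:poly (P ?n) 1:]" "\<forall>k\<ge>?n. coeff Qn k = 0"
    "coeff Qn m = 1"
    using root_decomp[of "P ?n" 1] degP[of ?n] lcP[of ?n] by auto
  obtain Qm where Qm: "P m = [:-1,1:] * Qm + [:poly (P m) 1:]" "\<forall>k\<ge>m. coeff Qm k = 0"
    using root_decomp[of "P m" 1] degP[of m] by auto
  define c where "c = poly (P ?n) 1"
  define d where "d = poly (P m) 1"
  have e1: "Lf (P ?n * P ?n) = c * Lf (P ?n)"
  proof -
    have "Ip (P ?n * Qn) = 0" by (rule orth) (use Qn in auto)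
    moreover have "Lf (P ?n * P ?n) = - be * Ip (P ?n * Qn) + c * Lf (P ?n)"
      unfolding mul_decomp[OF Qn(1), of "P ?n"] c_def by (simp only: Lf_add Lf_smult Lf_root1)
    ultimately show ?thesis by simp
  qed
  have e2: "Lf (P m * P m) = d * Lf (P m)"
  proof -
    have "Ip (P m * Qm) = 0" by (rule orth) (use Qm in auto)
    moreover have "Lf (P m * P m) = - be * Ip (P m * Qm) + d * Lf (P m)"
      unfolding mul_decomp[OF Qm(1), of "P m"] d_def by (simp only: Lf_add Lf_smult Lf_root1)
    ultimately show ?thesis by simp
  qed
  have e3: "Lf (P ?n * P m) = d * Lf (P ?n)"
  proof -
    have "Ip (P ?n * Qm) = 0" by (rule orth) (use Qm in auto)
    moreover have "Lf (P ?n * P m) = - be * Ip (P ?n * Qm) + d * Lf (P ?n)"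
      unfolding mul_decomp[OF Qm(1), of "P ?n"] d_def by (simp only: Lf_add Lf_smult Lf_root1)
    ultimately show ?thesis by simp
  qed
  have e4: "Lf (P ?n * P m) = c * Lf (P m) - be * h m"
  proof -
    have "Ip (P m * Qn) = coeff Qn m * h m" by (rule proj) (use Qn in auto)
    then have "Ip (P m * Qn) = h m" using Qn(3) by simp
    moreover have "Lf (P m * P ?n) = - be * Ip (P m * Qn) + c * Lf (P m)"
      unfolding mul_decomp[OF Qn(1), of "P m"] c_def by (simp only: Lf_add Lf_smult Lf_root1)
    ultimately have "Lf (P m * P ?n) = c * Lf (P m) - be * h m" by simp
    then show ?thesis by (metis mult.commute)
  qed
  show ?thesis
    unfolding betaS xn_eq ynS e1 e2
    by (rule alg5[OF hm_pos(1) hm_pos(1) e3 e4])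
qed

lemma MX: "xn al be A B t P k - Rn al be A B t P k = Mf (P k * P k) / h k"
proof -
  have "Ip (pderiv (P k * P k)) = 0"
    by (simp only: pderiv_mult Ip_add Ip_pderiv_same) (simp?)
  then show ?thesis using hm_pos[of k]
    by (simp add: Mf_def xn_eq Rn_eq field_simps power2_eq_square)
qed

lemma MY: "yn al be A B t P (Suc m) - rn al be A B t P (Suc m) - real (Suc m) = Mf (P (Suc m) * P m) / h m"
proof -
  have "Ip (pderiv (P (Suc m) * P m)) = of_nat (Suc m) * h m"
    by (simp only: pderiv_mult Ip_add Ip_pderiv_up Ip_pderiv_down) (simp?)
  then show ?thesis using hm_pos[of m]
    by (simp add: Mf_def ynS rnS field_simps)
qed

lemma id6: "betaN al be A B t P (Suc m) * (xn al be A B t P (Suc m) - Rn al be A B t P (Suc m))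
              * (xn al be A B t P m - Rn al be A B t P m)
          = (yn al be A B t P (Suc m) - rn al be A B t P (Suc m) - real (Suc m))^2
            - al * (yn al be A B t P (Suc m) - rn al be A B t P (Suc m) - real (Suc m))"
proof -
  let ?n = "Suc m"
  obtain Qn where Qn: "P ?n = [:-0,1:] * Qn + [:poly (P ?n) 0:]" "\<forall>k\<ge>?n. coeff Qn k = 0"
    "coeff Qn m = 1"
    using root_decomp[of "P ?n" 0] degP[of ?n] lcP[of ?n] by auto
  obtain Qm where Qm: "P m = [:-0,1:] * Qm + [:poly (P m) 0:]" "\<forall>k\<ge>m. coeff Qm k = 0"
    using root_decomp[of "P m" 0] degP[of m] by auto
  define c where "c = poly (P ?n) 0"
  define d where "d = poly (P m) 0"
  have e1: "Mf (P ?n * P ?n) = c * Mf (P ?n)"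
  proof -
    have "Ip (P ?n * Qn) = 0" by (rule orth) (use Qn in auto)
    moreover have "Mf (P ?n * P ?n) = al * Ip (P ?n * Qn) + c * Mf (P ?n)"
      unfolding mul_decomp[OF Qn(1), of "P ?n"] c_def minus_zero by (simp only: Mf_add Mf_smult Mf_root0)
    ultimately show ?thesis by simp
  qed
  have e2: "Mf (P m * P m) = d * Mf (P m)"
  proof -
    have "Ip (P m * Qm) = 0" by (rule orth) (use Qm in auto)
    moreover have "Mf (P m * P m) = al * Ip (P m * Qm) + d * Mf (P m)"
      unfolding mul_decomp[OF Qm(1), of "P m"] d_def minus_zero by (simp only: Mf_add Mf_smult Mf_root0)
    ultimately show ?thesis by simp
  qed
  have e3: "Mf (P ?n * P m) = d * Mf (P ?n)"
  proof -
    have "Ip (P ?n * Qm) = 0" by (rule orth) (use Qm in auto)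
    moreover have "Mf (P ?n * P m) = al * Ip (P ?n * Qm) + d * Mf (P ?n)"
      unfolding mul_decomp[OF Qm(1), of "P ?n"] d_def minus_zero by (simp only: Mf_add Mf_smult Mf_root0)
    ultimately show ?thesis by simp
  qed
  have e4: "Mf (P ?n * P m) = al * h m + c * Mf (P m)"
  proof -
    have "Ip (P m * Qn) = coeff Qn m * h m" by (rule proj) (use Qn in auto)
    then have "Ip (P m * Qn) = h m" using Qn(3) by simp
    moreover have "Mf (P m * P ?n) = al * Ip (P m * Qn) + c * Mf (P m)"
      unfolding mul_decomp[OF Qn(1), of "P m"] c_def minus_zero by (simp only: Mf_add Mf_smult Mf_root0)
    ultimately have "Mf (P m * P ?n) = al * h m + c * Mf (P m)" by simp
    then show ?thesis by (metis mult.commute)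
  qed
  show ?thesis
    unfolding betaS MX MY e1 e2
    by (rule alg6[OF hm_pos(1) hm_pos(1) e3 e4])
qed

end

theorem mainTheorem4:
  fixes al be A B t :: real
    and P :: "nat \<Rightarrow> real poly"
    and alpha :: "nat \<Rightarrow> real"
  assumes hal: "al > 0" and hbe: "be > 0"
    and hA: "A \<ge> 0" and hAB: "A + B \<ge> 0" and hnz: "A \<noteq> 0 \<or> B \<noteq> 0"
    and ht: "0 < t" "t < 1"
    and hdeg: "\<forall>n. degree (P n) = n \<and> lead_coeff (P n) = 1"
    and horth: "\<forall>i j. i \<noteq> j \<longrightarrow> ip al be A B t (P i) (P j) = 0"
    and hpos: "\<forall>n. hn al be A B t P n > 0"
    and hrec: "\<forall>n. [:0, 1:] * P n = P (Suc n) + smult (alpha n) (P n)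
                    + smult (betaN al be A B t P n) (P (n - 1))"
  shows
    "(\<forall>n. rn al be A B t P (n + 1) + rn al be A B t P n = (t - alpha n) * Rn al be A B t P n)
   \<and> (\<forall>n. - (yn al be A B t P (n + 1) + yn al be A B t P n)
          = (alpha n - 1) * xn al be A B t P n + be)
   \<and> (\<forall>n. yn al be A B t P (n + 1) + yn al be A B t P n - rn al be A B t P (n + 1) - rn al be A B t P n
          = 2 * real n + 1 + al - alpha n * (xn al be A B t P n - Rn al be A B t P n))
   \<and> (\<forall>n\<ge>1. betaN al be A B t P n * Rn al be A B t P n * Rn al be A B t P (n - 1)
          = (rn al be A B t P n)^2)
   \<and> (\<forall>n\<ge>1. betaN al be A B t P n * xn al be A B t P n * xn al be A B t P (n - 1)
          = (yn al be A B t P n)^2 + be * yn al be A B t P n)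
   \<and> (\<forall>n\<ge>1. betaN al be A B t P n * (xn al be A B t P n - Rn al be A B t P n)
              * (xn al be A B t P (n - 1) - Rn al be A B t P (n - 1))
          = (yn al be A B t P n - rn al be A B t P n - real n)^2
            - al * (yn al be A B t P n - rn al be A B t P n - real n))
   \<and> (\<forall>n\<ge>1. betaN al be A B t P n * (xn al be A B t P n * Rn al be A B t P (n - 1)
              + xn al be A B t P (n - 1) * Rn al be A B t P n)
          = (2 * real n + al + be) * yn al be A B t P n - (2 * real n + al) * rn al be A B t P n
            + 2 * yn al be A B t P n * rn al be A B t P n - real n * (real n + al))"
proof -
  interpret opsetup al be A B t P alpha
    by (rule opsetup.intro[OF hal hbe ht(1) ht(2) hdeg horth hpos hrec])
  show ?thesis
  proof (intro conjI allI impI)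
    fix n show "rn al be A B t P (n + 1) + rn al be A B t P n = (t - alpha n) * Rn al be A B t P n"
      by (rule id1)
  next
    fix n show "- (yn al be A B t P (n + 1) + yn al be A B t P n)
          = (alpha n - 1) * xn al be A B t P n + be" by (rule id2)
  next
    fix n show "yn al be A B t P (n + 1) + yn al be A B t P n - rn al be A B t P (n + 1) - rn al be A B t P n
          = 2 * real n + 1 + al - alpha n * (xn al be A B t P n - Rn al be A B t P n)" by (rule id3)
  next
    fix n :: nat assume "1 \<le> n" then obtain m where n: "n = Suc m" by (cases n) auto
    show "betaN al be A B t P n * Rn al be A B t P n * Rn al be A B t P (n - 1)
          = (rn al be A B t P n)^2" unfolding n diff_Suc_1 by (rule id4)
  next
    fix n :: nat assume "1 \<le> n" then obtain m where n: "n = Suc m" by (cases n) auto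
    show "betaN al be A B t P n * xn al be A B t P n * xn al be A B t P (n - 1)
          = (yn al be A B t P n)^2 + be * yn al be A B t P n" unfolding n diff_Suc_1 by (rule id5)
  next
    fix n :: nat assume "1 \<le> n" then obtain m where n: "n = Suc m" by (cases n) auto
    show "betaN al be A B t P n * (xn al be A B t P n - Rn al be A B t P n)
              * (xn al be A B t P (n - 1) - Rn al be A B t P (n - 1))
          = (yn al be A B t P n - rn al be A B t P n - real n)^2
            - al * (yn al be A B t P n - rn al be A B t P n - real n)" unfolding n diff_Suc_1 by (rule id6)
  next
    fix n :: nat assume "1 \<le> n" then obtain m where n: "n = Suc m" by (cases n) auto
    show "betaN al be A B t P n * (xn al be A B t P n * Rn al be A B t P (n - 1)
              + xn al be A B t P (n - 1) * Rn al be A B t P n)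
          = (2 * real n + al + be) * yn al be A B t P n - (2 * real n + al) * rn al be A B t P n
            + 2 * yn al be A B t P n * rn al be A B t P n - real n * (real n + al)"
      unfolding n diff_Suc_1 by (rule alg7[OF id4 id5 id6])
  qed
qed

end
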